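(* Let $f$ satisfy conditions (1) and (2b), let $p>0$, $a=p/\pi$, and $n\in\mathbb{N}_0$. In the expression \[ 2\pi\int_0^\infty a\sum_{k=0}^\infty c_{2k}\,p^k\sum_{l=0}^k(-1)^{k-l}\frac{p^l}{(k-l)!\,(l!)^2}\,r^{2l+2n+1}\,e^{-pr^2}\,dr \] the order of summation and integration may be reversed, for arbitrary values of $p$.
   Context: $f:[0,\infty)\to\mathbb{R}$; $c_n=2\pi\int_0^\infty f(r)\,r^{n+1}dr$. Condition (1): there is a constant $F$ with $0\le f(r)\le F$ for all $r\ge0$, $c_0$ exists and $c_0>0$. Condition (2b): $c_{2n}$ exists for all $n\in\mathbb{N}_0$ and $c_n^{1/n}=o(n^{1/2})$ as $n\to\infty$. *)

theory Defs
  imports "HOL-Analysis.Analysis" "HOL-Library.Landau_Symbols"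
begin

text \<open>Moments c_n = 2 pi int_0^infty f(r) r^(n+1) dr (Henstock-Kurzweil integral;
  for nonnegative f this coincides with the Lebesgue integral).\<close>
definition moment :: "(real \<Rightarrow> real) \<Rightarrow> nat \<Rightarrow> real" where
  "moment f n = 2 * pi * integral {0..} (\<lambda>r. f r * r ^ (n + 1))"

definition moment_exists :: "(real \<Rightarrow> real) \<Rightarrow> nat \<Rightarrow> bool" where
  "moment_exists f n \<longleftrightarrow> (\<lambda>r. f r * r ^ (n + 1)) integrable_on {0..}"

definition cond1 :: "(real \<Rightarrow> real) \<Rightarrow> bool" where
  "cond1 f \<longleftrightarrow> (\<exists>F. \<forall>r\<ge>0. 0 \<le> f r \<and> f r \<le> F) \<and> moment_exists f 0 \<and> moment f 0 > 0"

definition cond2b :: "(real \<Rightarrow> real) \<Rightarrow> bool" where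
  "cond2b f \<longleftrightarrow> (\<forall>n. moment_exists f (2 * n)) \<and>
     (\<lambda>n. moment f n powr (1 / real n)) \<in> o(\<lambda>n. sqrt (real n))"

definition term11 :: "(real \<Rightarrow> real) \<Rightarrow> real \<Rightarrow> nat \<Rightarrow> nat \<Rightarrow> real \<Rightarrow> real" where
  "term11 f p n k r = (p / pi) * moment f (2 * k) * p ^ k *
     (\<Sum>l=0..k. (-1) ^ (k - l) * p ^ l / (fact (k - l) * (fact l)\<^sup>2)
        * r ^ (2 * l + 2 * n + 1) * exp (- p * r\<^sup>2))"

end

theory Submission
  imports Defs "HOL-Real_Asymp.Real_Asymp"
begin

lemma pow_div_fact_le_exp:
  fixes x :: real assumes "x \<ge> 0" shows "x ^ m / fact m \<le> exp x"
proof -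
  have s: "(\<lambda>i. x ^ i / fact i) sums exp x"
    using exp_converges[of x] by (simp add: divide_inverse mult.commute scaleR_conv_of_real)
  have "(\<Sum>i\<in>{m}. x ^ i / fact i) \<le> exp x"
  proof -
    have "(\<Sum>i\<in>{m}. x ^ i / fact i) \<le> (\<Sum>i. x ^ i / fact i)"
      by (rule sum_le_suminf[OF sums_summable[OF s]]) (use assms in auto)
    then show ?thesis using sums_unique[OF s] by simp
  qed
  then show ?thesis by simp
qed

lemma gauss_bound:
  fixes r p :: real assumes "r \<ge> 0" "p > 0"
  shows "r ^ (2*m+1) * exp (- p * r\<^sup>2) \<le> fact m * (2/p)^m * (r * exp (- (p/2) * r\<^sup>2))"
proof -
  have "(p * r\<^sup>2 / 2) ^ m / fact m \<le> exp (p * r\<^sup>2 / 2)"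
    using assms by (intro pow_div_fact_le_exp) auto
  moreover have "r ^ (2*m) = (r\<^sup>2)^m" by (simp add: power_mult)
  ultimately have "(p/2)^m * r ^ (2*m) \<le> fact m * exp (p * r\<^sup>2 / 2)"
    by (simp add: field_simps power_mult_distrib)
  then have "r ^ (2*m) \<le> fact m * (2/p)^m * exp (p * r\<^sup>2 / 2)"
    using assms by (simp add: field_simps power_divide)
  then have "r ^ (2*m) * (r * exp (- p * r\<^sup>2)) \<le> fact m * (2/p)^m * exp (p * r\<^sup>2 / 2) * (r * exp (- p * r\<^sup>2))"
    using assms by (intro mult_right_mono) auto
  moreover have "exp (p * r\<^sup>2 / 2) * exp (- p * r\<^sup>2) = exp (- (p/2) * r\<^sup>2)"
    by (simp flip: exp_add)
  ultimately show ?thesis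
    by (simp add: algebra_simps power_add)
qed

lemma phi_integrable:
  fixes q :: real assumes "q > 0"
  shows "(\<lambda>r. r * exp (- q * r\<^sup>2)) integrable_on {0..}"
proof -
  have "((\<lambda>r. r * exp (- q * r\<^sup>2)) has_integral 1/(2*q)) {0..}"
  proof (intro has_integral_to_inf integrable_continuous_interval continuous_intros)
    have "((\<lambda>r. r * exp (- q * r\<^sup>2)) has_integral (-exp (-q*y\<^sup>2)/(2*q) - (-exp (-q*0\<^sup>2)/(2*q)))) {0..y}"
      if "y \<ge> 0" for y
      using that \<open>q > 0\<close>
      by (intro fundamental_theorem_of_calculus)
         (auto intro!: derivative_eq_intros
               simp flip: has_real_derivative_iff_has_vector_derivative simp: field_simps)
    then have "\<forall>\<^sub>F y in at_top. integral {0..y} (\<lambda>r. r * exp (- q * r\<^sup>2)) = -exp (-q*y\<^sup>2)/(2*q) + 1/(2*q)"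
      using eventually_at_top_linorder by fastforce
    moreover have "((\<lambda>y::real. -exp (-q*y\<^sup>2)/(2*q) + 1/(2*q)) \<longlongrightarrow> 1/(2*q)) at_top"
      using \<open>q > 0\<close> by real_asymp
    ultimately show "((\<lambda>y. integral {0..y} (\<lambda>r. r * exp (- q * r\<^sup>2))) \<longlongrightarrow> 1/(2*q)) at_top"
      by (simp add: filterlim_cong)
  qed auto
  then show ?thesis by blast
qed

lemma kk_fact: "real k ^ k / fact k \<le> exp 1 ^ k"
proof -
  have "exp (real k) = exp 1 ^ k" using exp_of_nat_mult[of k 1] by simp
  then show ?thesis using pow_div_fact_le_exp[of "real k" k] by simp
qed

lemma moment_series:
  fixes m :: "nat \<Rightarrow> real" and y :: real
  assumes nonneg: "\<And>k. m (2*k) \<ge> 0"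
    and o: "(\<lambda>n. m n powr (1 / real n)) \<in> o(\<lambda>n. sqrt (real n))"
    and y: "y > 0"
  shows "summable (\<lambda>k. m (2*k) * y ^ k / fact k)"
proof -
  define \<epsilon> where "\<epsilon> = sqrt (1 / (4 * exp 1 * y))"
  have \<epsilon>pos: "\<epsilon> > 0" using y by (simp add: \<epsilon>_def)
  have \<epsilon>sq: "\<epsilon>\<^sup>2 = 1 / (4 * exp 1 * y)" using y by (simp add: \<epsilon>_def)
  have "eventually (\<lambda>n. norm (m n powr (1 / real n)) \<le> \<epsilon> * norm (sqrt (real n))) at_top"
    using landau_o.smallD[OF o \<epsilon>pos] .
  then obtain N where N: "\<And>n. n \<ge> N \<Longrightarrow> norm (m n powr (1 / real n)) \<le> \<epsilon> * norm (sqrt (real n))"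
    by (auto simp: eventually_at_top_linorder)
  have bound: "norm (m (2*k) * y ^ k / fact k) \<le> (1/2) ^ k" if k: "k \<ge> max N 1" for k
  proof -
    define x where "x = m (2*k) powr (1 / real (2*k))"
    have x0: "x \<ge> 0" by (simp add: x_def)
    have xle: "x \<le> \<epsilon> * sqrt (real (2*k))"
      using N[of "2*k"] k by (simp add: x_def)
    have k1: "k \<ge> 1" using k by simp
    have mx: "m (2*k) = x ^ (2*k)"
    proof (cases "m (2*k) = 0")
      case True then show ?thesis using k1 by (simp add: x_def)
    next
      case False
      then have "m (2*k) > 0" using nonneg[of k] by simp
      then have "x > 0" by (simp add: x_def)
      then have "x ^ (2*k) = x powr real (2*k)"
        by (rule powr_realpow[symmetric])
      also have "\<dots> = m (2*k)" using \<open>m (2*k) > 0\<close> k1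
        by (simp add: x_def powr_powr)
      finally show ?thesis by simp
    qed
    have "x ^ (2*k) \<le> (\<epsilon> * sqrt (real (2*k))) ^ (2*k)"
      using x0 xle by (intro power_mono) auto
    also have "\<dots> = (\<epsilon>\<^sup>2 * (2 * real k)) ^ k"
      by (simp add: power_mult power_mult_distrib)
    finally have mle: "m (2*k) \<le> (\<epsilon>\<^sup>2 * (2 * real k)) ^ k" using mx by simp
    have "norm (m (2*k) * y ^ k / fact k) = m (2*k) * y ^ k / fact k"
      using nonneg[of k] y by simp
    also have "\<dots> \<le> (\<epsilon>\<^sup>2 * (2 * real k)) ^ k * y ^ k / fact k"
      using mle y by (intro divide_right_mono mult_right_mono) auto
    also have "\<dots> = (2 * \<epsilon>\<^sup>2 * y) ^ k * (real k ^ k / fact k)"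
      by (simp add: power_mult_distrib field_simps)
    also have "\<dots> \<le> (2 * \<epsilon>\<^sup>2 * y) ^ k * exp 1 ^ k"
      using kk_fact[of k] \<epsilon>pos y by (intro mult_left_mono) auto
    also have "\<dots> = (1/2) ^ k"
      using y by (simp add: \<epsilon>sq flip: power_mult_distrib)
    finally show ?thesis .
  qed
  show ?thesis
    by (rule summable_comparison_test'[where N="max N 1", OF summable_geometric[of "1/2::real"]])
       (use bound in auto)
qed

lemma fact_add_le: "(fact (l+n) :: real) \<le> 2^(l+n) * fact l * fact n"
proof -
  have e: "fact l * fact n * ((l+n) choose l) = (fact (l+n) :: nat)"
    using binomial_fact_lemma[of l "l+n"] by simp
  have "fact l * fact n * ((l+n) choose l) \<le> fact l * fact n * (2::nat)^(l+n)"
    by (rule mult_le_mono2) (rule binomial_le_pow2)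
  then have "(fact (l+n) :: nat) \<le> 2^(l+n) * fact l * fact n"
    unfolding e by (simp add: mult_ac)
  then have "real (fact (l+n)) \<le> real (2^(l+n) * fact l * fact n)"
    by (rule of_nat_mono)
  then show ?thesis by simp
qed

lemma fact_split_le: assumes "l \<le> k" shows "(fact k :: real) \<le> 2^k * fact (k-l) * fact l"
proof -
  have e: "fact l * fact (k-l) * (k choose l) = (fact k :: nat)"
    using binomial_fact_lemma[OF assms] by simp
  have "fact l * fact (k-l) * (k choose l) \<le> fact l * fact (k-l) * (2::nat)^k"
    by (rule mult_le_mono2) (rule binomial_le_pow2)
  then have "(fact k :: nat) \<le> 2^k * fact (k-l) * fact l"
    unfolding e by (simp add: mult_ac)
  then have "real (fact k) \<le> real (2^k * fact (k-l) * fact l)"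
    by (rule of_nat_mono)
  then show ?thesis by simp
qed

lemma summand_bound:
  fixes r p :: real assumes r: "r \<ge> 0" and p: "p > 0" and l: "l \<le> k"
  shows "\<bar>(-1) ^ (k - l) * p ^ l / (fact (k - l) * (fact l)\<^sup>2)
        * r ^ (2 * l + 2 * n + 1) * exp (- p * r\<^sup>2)\<bar>
     \<le> fact n * (4/p)^n * 8^k / fact k * (r * exp (- (p/2) * r\<^sup>2))"
proof -
  define \<phi> where "\<phi> = r * exp (- (p/2) * r\<^sup>2)"
  have \<phi>0: "\<phi> \<ge> 0" using r by (simp add: \<phi>_def)
  have A: "\<bar>(-1) ^ (k - l) * p ^ l / (fact (k - l) * (fact l)\<^sup>2)
        * r ^ (2 * l + 2 * n + 1) * exp (- p * r\<^sup>2)\<bar>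
      = p ^ l / (fact (k - l) * (fact l)\<^sup>2) * (r ^ (2 * (l + n) + 1) * exp (- p * r\<^sup>2))"
    using r p by (simp add: abs_mult power_abs algebra_simps)
  also have "\<dots> \<le> p ^ l / (fact (k - l) * (fact l)\<^sup>2) * (fact (l+n) * (2/p)^(l+n) * \<phi>)"
    using gauss_bound[OF r p, of "l+n"] p unfolding \<phi>_def
    by (intro mult_left_mono) auto
  also have "\<dots> \<le> p ^ l / (fact (k - l) * (fact l)\<^sup>2) * ((2^(l+n) * fact l * fact n) * (2/p)^(l+n) * \<phi>)"
    using fact_add_le[of l n] p \<phi>0
    by (intro mult_left_mono mult_right_mono) auto
  also have "\<dots> = fact n * (4/p)^n * (4^l / (fact (k-l) * fact l)) * \<phi>"
    using p by (simp add: power2_eq_square power_add field_simps power_divide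
       flip: power_mult_distrib)
  also have "\<dots> \<le> fact n * (4/p)^n * (4^k * 2^k / fact k) * \<phi>"
  proof -
    have "4^l / (fact (k-l) * fact l) \<le> (4::real)^k * 2^k / fact k"
    proof -
      have "(4::real)^l \<le> 4^k" using l by (intro power_increasing) auto
      moreover have "fact k \<le> 2^k * (fact (k-l) * fact l :: real)"
        using fact_split_le[OF l] by (simp add: mult.assoc)
      have F1: "(fact (k-l) * fact l :: real) > 0" by simp
      have "1 \<le> 2^k * (fact (k-l) * fact l :: real) / fact k"
        using \<open>fact k \<le> _\<close> by simp
      then have "(4::real)^k * 1 \<le> 4^k * (2^k * (fact (k-l) * fact l :: real) / fact k)"
        by (intro mult_left_mono) auto
      moreover have "(4::real)^k * (2^k * (fact (k-l) * fact l :: real) / fact k)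
          = (4^k * 2^k / fact k) * (fact (k-l) * fact l)" by simp
      ultimately have "(4::real)^l \<le> (4^k * 2^k / fact k) * (fact (k-l) * fact l)"
        using \<open>(4::real)^l \<le> 4^k\<close> by linarith
      then show ?thesis using F1 by (simp add: divide_le_eq)
    qed
    then show ?thesis using p \<phi>0 by (intro mult_left_mono mult_right_mono) auto
  qed
  also have "\<dots> = fact n * (4/p)^n * 8^k / fact k * \<phi>"
    by (simp add: field_simps flip: power_mult_distrib)
  finally show ?thesis unfolding \<phi>_def .
qed

lemma term_bound:
  fixes r p :: real assumes r: "r \<ge> 0" and p: "p > 0" and c: "moment f (2*k) \<ge> 0"
  shows "\<bar>term11 f p n k r\<bar> \<le> (p/pi * moment f (2*k) * p^k * (fact n * (4/p)^n * 16^k / fact k))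
            * (r * exp (- (p/2) * r\<^sup>2))"
proof -
  define E where "E = fact n * (4/p)^n * 8^k / fact k * (r * exp (- (p/2) * r\<^sup>2))"
  define A where "A = p/pi * moment f (2*k) * p^k"
  have A0: "A \<ge> 0" using p c by (simp add: A_def)
  have E0: "E \<ge> 0" using p r by (simp add: E_def)
  let ?s = "\<lambda>l. (-1) ^ (k - l) * p ^ l / (fact (k - l) * (fact l)\<^sup>2)
        * r ^ (2 * l + 2 * n + 1) * exp (- p * r\<^sup>2)"
  have "\<bar>sum ?s {0..k}\<bar> \<le> (\<Sum>l=0..k. \<bar>?s l\<bar>)" by (rule sum_abs)
  also have "\<dots> \<le> of_nat (card {0..k}) * E"
    by (rule sum_bounded_above) (use summand_bound[OF r p] in \<open>auto simp: E_def\<close>)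
  also have "\<dots> = real (k+1) * E" by simp
  also have "\<dots> \<le> 2^k * E"
  proof -
    have "k + 1 \<le> (2::nat)^k" by (induction k) auto
    then have "real (k+1) \<le> real ((2::nat)^k)" by (rule of_nat_mono)
    then have "real (k+1) \<le> 2^k" by simp
    then show ?thesis using E0 by (intro mult_right_mono) auto
  qed
  finally have S: "\<bar>sum ?s {0..k}\<bar> \<le> 2^k * E" .
  have "\<bar>term11 f p n k r\<bar> = A * \<bar>sum ?s {0..k}\<bar>"
  proof -
    have "term11 f p n k r = A * sum ?s {0..k}" unfolding term11_def A_def by simp
    then show ?thesis using A0 by (simp add: abs_mult)
  qed
  also have "\<dots> \<le> A * (2^k * E)" using S A0 by (intro mult_left_mono) auto
  also have "\<dots> = (p/pi * moment f (2*k) * p^k * (fact n * (4/p)^n * 16^k / fact k))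
            * (r * exp (- (p/2) * r\<^sup>2))"
    by (simp add: A_def E_def field_simps flip: power_mult_distrib)
  finally show ?thesis .
qed

theorem lemma11:
  fixes f :: "real \<Rightarrow> real" and p :: real and n :: nat
  assumes "cond1 f" and "cond2b f" and "p > 0"
  shows "(\<forall>r\<ge>0. summable (\<lambda>k. term11 f p n k r))
    \<and> (\<forall>k. term11 f p n k integrable_on {0..})
    \<and> (\<lambda>r. \<Sum>k. term11 f p n k r) integrable_on {0..}
    \<and> summable (\<lambda>k. 2 * pi * integral {0..} (term11 f p n k))
    \<and> 2 * pi * integral {0..} (\<lambda>r. \<Sum>k. term11 f p n k r)
        = (\<Sum>k. 2 * pi * integral {0..} (term11 f p n k))"
proof -
  have p: "p > 0" by fact
  from assms(1) obtain F where fF: "\<And>r. r \<ge> 0 \<Longrightarrow> 0 \<le> f r \<and> f r \<le> F"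
    unfolding cond1_def by blast
  from assms(2) have mex: "\<And>k. moment_exists f (2*k)"
    and o: "(\<lambda>n. moment f n powr (1 / real n)) \<in> o(\<lambda>n. sqrt (real n))"
    unfolding cond2b_def by auto
  have c0: "moment f (2*k) \<ge> 0" for k
  proof -
    have "integral {0..} (\<lambda>r. f r * r ^ (2*k + 1)) \<ge> 0"
      using mex[of k] fF unfolding moment_exists_def
      by (intro Henstock_Kurzweil_Integration.integral_nonneg) auto
    then show ?thesis by (simp add: moment_def)
  qed
  define K where "K = p/pi * fact n * (4/p)^n"
  define D where "D k = p/pi * moment f (2*k) * p^k * (fact n * (4/p)^n * 16^k / fact k)" for k
  have DK: "D k = K * (moment f (2*k) * (16*p)^k / fact k)" for k
    by (simp add: D_def K_def field_simps power_mult_distrib)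
  have sumD: "summable D"
    unfolding DK using moment_series[OF c0 o, of "16*p"] p by (intro summable_mult) auto
  have D0: "D k \<ge> 0" for k using c0[of k] p by (simp add: D_def)
  define \<phi> where "\<phi> r = r * exp (- (p/2) * r\<^sup>2)" for r
  have \<phi>int: "\<phi> integrable_on {0..}"
    unfolding \<phi>_def using phi_integrable[of "p/2"] p by simp
  have \<phi>0: "r \<ge> 0 \<Longrightarrow> \<phi> r \<ge> 0" for r by (simp add: \<phi>_def)
  have tb: "r \<ge> 0 \<Longrightarrow> \<bar>term11 f p n k r\<bar> \<le> D k * \<phi> r" for r k
    unfolding D_def \<phi>_def using term_bound[OF _ p c0] by blast
  have summ: "summable (\<lambda>k. term11 f p n k r)" if "r \<ge> 0" for r
    by (rule summable_comparison_test[where g="\<lambda>k. D k * \<phi> r"])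
       (use tb that summable_mult2[OF sumD] in auto)
  have leb: "{0::real..} \<in> sets lebesgue" by simp
  have tint: "term11 f p n k integrable_on {0..}" for k
  proof (rule measurable_bounded_by_integrable_imp_integrable_real[OF _ _ _ leb])
    show "term11 f p n k \<in> borel_measurable (lebesgue_on {0..})"
      by (rule continuous_imp_measurable_on_sets_lebesgue[OF _ leb])
         (unfold term11_def, intro continuous_intros)
    show "(\<lambda>r. D k * \<phi> r) integrable_on {0..}"
      using integrable_on_cmult_left[OF \<phi>int, of "D k"] by simp
    show "\<And>r. r \<in> {0..} \<Longrightarrow> \<bar>term11 f p n k r\<bar> \<le> D k * \<phi> r" using tb by auto
  qed
  define G where "G N r = (\<Sum>k<N. term11 f p n k r)" for N r
  have d1: "G N integrable_on {0..}" for N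
    unfolding G_def by (rule integrable_sum) (use tint in auto)
  have d2: "(\<lambda>r. suminf D * \<phi> r) integrable_on {0..}"
    using integrable_on_cmult_left[OF \<phi>int, of "suminf D"] by simp
  have d3: "norm (G N r) \<le> suminf D * \<phi> r" if "r \<in> {0..}" for N r
  proof -
    from that have r: "r \<ge> 0" by simp
    have "norm (G N r) \<le> (\<Sum>k<N. \<bar>term11 f p n k r\<bar>)"
      unfolding G_def real_norm_def by (rule sum_abs)
    also have "\<dots> \<le> (\<Sum>k<N. D k * \<phi> r)" using tb[OF r] by (intro sum_mono) auto
    also have "\<dots> = (\<Sum>k<N. D k) * \<phi> r" by (simp add: sum_distrib_right)
    also have "\<dots> \<le> suminf D * \<phi> r"
      using sum_le_suminf[OF sumD, of "{..<N}"] D0 \<phi>0[OF r] by (intro mult_right_mono) auto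
    finally show ?thesis .
  qed
  have d4: "(\<lambda>N. G N r) \<longlonglongrightarrow> (\<Sum>k. term11 f p n k r)" if "r \<in> {0..}" for r
    unfolding G_def using summ[of r] that by (intro summable_LIMSEQ) auto
  note dc = dominated_convergence[OF d1 d2 d3 d4]
  have "(\<lambda>k. integral {0..} (term11 f p n k)) sums integral {0..} (\<lambda>r. \<Sum>k. term11 f p n k r)"
  proof -
    have "integral {0..} (G N) = (\<Sum>k<N. integral {0..} (term11 f p n k))" for N
      unfolding G_def by (rule integral_sum) (use tint in auto)
    then show ?thesis using dc(2) unfolding sums_def by simp
  qed
  then have sm: "(\<lambda>k. 2 * pi * integral {0..} (term11 f p n k)) sums
      (2 * pi * integral {0..} (\<lambda>r. \<Sum>k. term11 f p n k r))"
    by (rule sums_mult)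
  show ?thesis
    using summ tint dc(1) sums_summable[OF sm] sums_unique[OF sm] by auto
qed

end
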